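(* Let $B_n(t)=\sum_{k=0}^{n}\binom{n}{k}^2t^k$ for $n\ge0$ and $B_n(t)=0$ for $n<0$, and let $D_m(B(t);n)=\det(B_{i+j+m}(t))_{i,j=0}^{n-1}$. Then for every integer $m\ge1$: $D_{-m}(B(t);n)=0$ for $1\le n\le m$, and for $n\ge m+1$ $$D_{-m}(B(t);n)=(-1)^{\binom{m+1}{2}}\,(2t)^{\,n-m-1}\,p_{m+1}(t,n-m-1)$$ as an identity of polynomials in $t$.
   Context: The Narayana polynomials are $C_0(t)=1$ and $C_n(t)=\sum_{k=0}^{n-1}\binom{n-1}{k}\binom{n}{k}\frac{1}{k+1}t^k$ for $n\ge1$, extended by $C_n(t)=0$ for $n<0$. For integers $m,n\ge0$, $p_m(t,n)=\det(C_{i+j+m}(t))_{i,j=0}^{n-1}$ (the $0\times0$ determinant being $1$). It is known that $\sum_{n\ge0}B_n(t)x^n=\frac{1}{\sqrt{(1-(1+t)x)^2-4tx^2}}$. *)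

theory Defs
  imports "HOL-Computational_Algebra.Polynomial" "Jordan_Normal_Form.Determinant"
begin

definition narayana :: "nat \<Rightarrow> real poly" where
  "narayana n = (if n = 0 then 1 else
     (\<Sum>k<n. monom (real ((n - 1) choose k) * real (n choose k) / real (k + 1)) k))"

text \<open>p_m(t,n) = det (C_{i+j+m}(t))_{i,j=0}^{n-1}; det of the 0x0 matrix is 1.\<close>
definition p_poly :: "nat \<Rightarrow> nat \<Rightarrow> real poly" where
  "p_poly m n = det (mat n n (\<lambda>(i, j). narayana (i + j + m)))"

definition B_poly :: "int \<Rightarrow> real poly" where
  "B_poly n = (if n < 0 then 0 else
     (\<Sum>k\<le>nat n. monom (real ((nat n) choose k) ^ 2) k))"

definition D_B :: "int \<Rightarrow> nat \<Rightarrow> real poly" where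
  "D_B m n = det (mat n n (\<lambda>(i, j). B_poly (int i + int j + m)))"

end

theory Submission
  imports Defs "HOL-Computational_Algebra.Formal_Power_Series"
begin


lemma sum_split_shift: fixes r k :: nat shows "(\<Sum>p\<le>r+k. f p) = (\<Sum>p<r. f p) + (\<Sum>j\<le>k. f (r+j))"
proof (induction k)
  case 0 show ?case by (simp add: lessThan_Suc_atMost[symmetric])
next
  case (Suc k) then show ?case by (simp add: sum.atMost_Suc ac_simps)
qed

lemma sum_reflect: fixes i :: nat shows "(\<Sum>l\<le>i. f (i - l) l) = (\<Sum>p\<le>i. f p (i - p))"
  by (rule sum.reindex_bij_witness[where i="\<lambda>p. i - p" and j="\<lambda>l. i - l"]) auto

definition antid :: "nat \<Rightarrow> 'a::comm_ring_1 mat" where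
  "antid k = mat k k (\<lambda>(i,j). if i + j + 1 = k then 1 else 0)"

lemma det_antid: "det (antid k :: 'a::comm_ring_1 mat) = (-1) ^ (k choose 2)"
proof (induction k)
  case 0 then show ?case by (simp add: antid_def numeral_2_eq_2)
next
  case (Suc k)
  have car: "(antid (Suc k) :: 'a mat) \<in> carrier_mat (Suc k) (Suc k)" by (simp add: antid_def)
  have "det (antid (Suc k) :: 'a mat) = (\<Sum>j<Suc k. antid (Suc k) $$ (0,j) * cofactor (antid (Suc k)) 0 j)"
    by (rule laplace_expansion_row[OF car]) simp
  also have "\<dots> = cofactor (antid (Suc k) :: 'a mat) 0 k"
    by (subst sum.remove[of _ k]) (auto simp: antid_def intro!: sum.neutral)
  also have "mat_delete (antid (Suc k) :: 'a mat) 0 k = antid k"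
    by (rule eq_matI) (auto simp: mat_delete_def antid_def)
  then have "cofactor (antid (Suc k) :: 'a mat) 0 k = (-1)^k * det (antid k :: 'a mat)"
    by (simp add: cofactor_def)
  finally show ?case using Suc.IH by (simp add: power_add numeral_2_eq_2)
qed

lemma sum_trunc:
  fixes k n :: nat and f g :: "nat \<Rightarrow> 'a::comm_ring_1"
  assumes "k < n"
  shows "(\<Sum>j<n. f j * (if j \<le> k then g j else 0)) = (\<Sum>j\<le>k. f j * g j)"
proof -
  have "(\<Sum>j<n. f j * (if j \<le> k then g j else 0)) = (\<Sum>j<n. if j \<le> k then f j * g j else 0)"
    by (rule sum.cong) auto
  also have "\<dots> = sum (\<lambda>j. f j * g j) {j\<in>{..<n}. j \<le> k}"
    by (simp only: sum.inter_filter[OF finite_lessThan])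
  also have "{j\<in>{..<n}. j \<le> k} = {..k}" using assms by auto
  finally show ?thesis .
qed

lemma sum_trunc2:
  fixes k n :: nat and f g :: "nat \<Rightarrow> 'a::comm_ring_1"
  assumes "k < n"
  shows "(\<Sum>j<n. (if j \<le> k then g j else 0) * f j) = (\<Sum>j\<le>k. g j * f j)"
  using sum_trunc[OF assms, of f g] by (simp add: mult.commute)

lemma sum_trunc3:
  fixes k n :: nat and f g :: "nat \<Rightarrow> 'a::comm_ring_1"
  assumes "k < n"
  shows "(\<Sum>j<n. - ((if j \<le> k then g j else 0) * f j)) = (\<Sum>j\<le>k. - (g j * f j))"
  using sum_trunc[OF assms, of "\<lambda>j. - f j" g] by (simp add: mult.commute)

context
  fixes a c :: "nat \<Rightarrow> 'a::idom"
  assumes conv: "\<And>N. (\<Sum>i\<le>N. a i * c (N - i)) = (if N = 0 then 1 else 0)"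
  and c0: "c 0 = 1"
begin

lemma a0: "a 0 = 1" using conv[of 0] c0 by simp

lemma EA:
  assumes "i \<le> m"
  shows "(\<Sum>j\<le>k. (if i+j < m then 0 else a (i+j-m)) * c (k-j)) = (if i+k = m then 1 else 0)"
proof (cases "k < m - i")
  case True
  then show ?thesis by (intro trans[OF sum.neutral]) auto
next
  case False
  then obtain e where k: "k = (m - i) + e" by (metis le_add_diff_inverse not_less)
  have "(\<Sum>j\<le>k. (if i+j < m then 0 else a (i+j-m)) * c (k-j))
      = (\<Sum>j<m-i. (if i+j < m then 0 else a (i+j-m)) * c (k-j))
        + (\<Sum>j\<le>e. (if i+(m-i+j) < m then 0 else a (i+(m-i+j)-m)) * c (k-(m-i+j)))"
    unfolding k by (rule sum_split_shift)
  also have "(\<Sum>j<m-i. (if i+j < m then 0 else a (i+j-m)) * c (k-j)) = 0"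
    by (rule sum.neutral) auto
  also have "(\<Sum>j\<le>e. (if i+(m-i+j) < m then 0 else a (i+(m-i+j)-m)) * c (k-(m-i+j)))
      = (\<Sum>j\<le>e. a j * c (e - j))"
    using assms by (intro sum.cong) (auto simp: k)
  also have "\<dots> = (if i+k = m then 1 else 0)" using conv[of e] assms k by auto
  finally show ?thesis by simp
qed

lemma EB:
  "(\<Sum>j\<le>k. (if (m+1+i')+j < m then 0 else a ((m+1+i')+j-m)) * c (k-j))
     = - (\<Sum>p\<le>i'. a p * c (k+i'+1-p))"
proof -
  have "0 = (\<Sum>p\<le>(i'+1)+k. a p * c ((i'+1+k) - p))" using conv[of "i'+1+k"] by simp
  also have "\<dots> = (\<Sum>p<i'+1. a p * c ((i'+1+k) - p)) + (\<Sum>j\<le>k. a (i'+1+j) * c ((i'+1+k) - (i'+1+j)))"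
    by (rule sum_split_shift)
  also have "(\<Sum>p<i'+1. a p * c ((i'+1+k) - p)) = (\<Sum>p\<le>i'. a p * c (k+i'+1-p))"
    by (simp add: lessThan_Suc_atMost ac_simps)
  also have "(\<Sum>j\<le>k. a (i'+1+j) * c ((i'+1+k) - (i'+1+j)))
     = (\<Sum>j\<le>k. (if (m+1+i')+j < m then 0 else a ((m+1+i')+j-m)) * c (k-j))"
    by (intro sum.cong) auto
  finally show ?thesis by (simp add: eq_neg_iff_add_eq_0 add.commute)
qed

lemma hankel_shift:
  "det (mat (m+1+s) (m+1+s) (\<lambda>(i,j). if i+j < m then 0 else a (i+j-m)))
     = (-1)^((m+1) choose 2) * det (mat s s (\<lambda>(l,k). - c (l+k+m+2)))"
proof -
  define n where "n = m+1+s"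
  define H where "H = mat n n (\<lambda>(i,j). if i+j < m then 0 else a (i+j-m))"
  define W where "W = mat n n (\<lambda>(j,k). if j \<le> k then c (k-j) else 0)"
  define J where "J = (antid (m+1) :: 'a mat)"
  define X where "X = mat s s (\<lambda>(i,k). - (\<Sum>p\<le>i. a p * c ((k+(m+1))+i+1-p)))"
  define P where "P = H * W"
  define Y where "Y = mat s (m+1) (\<lambda>(i,k). P $$ (i+(m+1),k))"
  define L where "L = mat s s (\<lambda>(i,l). if l \<le> i then a (i-l) else 0)"
  define G where "G = mat s s (\<lambda>(l,k). - c (l+k+m+2))"
  have Hc: "H \<in> carrier_mat n n" and Wc: "W \<in> carrier_mat n n" unfolding H_def W_def by auto
  have detW: "det W = 1"
  proof -
    have "det W = prod_list (diag_mat W)"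
      by (rule det_upper_triangular[OF _ Wc]) (auto simp: W_def upper_triangular_def)
    also have "diag_mat W = replicate n 1"
      by (rule nth_equalityI) (auto simp: diag_mat_def W_def c0)
    also have "prod_list (replicate n (1::'a)) = 1" by simp
    finally show ?thesis .
  qed
  have Pent: "P $$ (i,k) = (\<Sum>j\<le>k. (if i+j < m then 0 else a (i+j-m)) * c (k-j))" if "i < n" "k < n" for i k
    using that unfolding P_def H_def W_def
    by (simp add: scalar_prod_def sum_trunc atLeast0LessThan)
  have PB: "P = four_block_mat J (0\<^sub>m (m+1) s) Y X"
  proof (rule eq_matI)
    show "dim_row P = dim_row (four_block_mat J (0\<^sub>m (m+1) s) Y X)"
      by (simp add: P_def H_def J_def antid_def X_def n_def)
    show "dim_col P = dim_col (four_block_mat J (0\<^sub>m (m+1) s) Y X)"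
      by (simp add: P_def W_def J_def antid_def X_def n_def)
    fix i k assume i: "i < dim_row (four_block_mat J (0\<^sub>m (m+1) s) Y X)"
      and k: "k < dim_col (four_block_mat J (0\<^sub>m (m+1) s) Y X)"
    then have i': "i < n" and k': "k < n" by (auto simp: J_def antid_def X_def n_def)
    show "P $$ (i,k) = four_block_mat J (0\<^sub>m (m+1) s) Y X $$ (i,k)"
    proof (cases "i < m+1")
      case True
      then have "i \<le> m" by simp
      then show ?thesis using True i' k' unfolding Pent[OF i' k'] EA[OF \<open>i \<le> m\<close>]
        by (auto simp: J_def antid_def X_def n_def)
    next
      case False
      then obtain i' where ii: "i = m+1+i'" by (metis le_add_diff_inverse not_less)
      show ?thesis
      proof (cases "k < m+1")
        case True
        then show ?thesis using False i' k' by (auto simp: J_def antid_def X_def Y_def n_def)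
      next
        case False2: False
        have "P $$ (i,k) = (\<Sum>j\<le>k. (if (m+1+i')+j < m then 0 else a ((m+1+i')+j-m)) * c (k-j))"
          using Pent[OF \<open>i < n\<close> \<open>k < n\<close>] ii by simp
        also have "\<dots> = - (\<Sum>p\<le>i'. a p * c (k+i'+1-p))" by (rule EB)
        finally have "P $$ (i,k) = - (\<Sum>p\<le>i'. a p * c (k+i'+1-p))" .
        then show ?thesis using False False2 i' k' ii
          by (auto simp: J_def antid_def X_def n_def ac_simps)
      qed
    qed
  qed
  have Yc: "Y \<in> carrier_mat s (m+1)" by (simp add: Y_def)
  have Xc: "X \<in> carrier_mat s s" by (simp add: X_def)
  have Jc: "J \<in> carrier_mat (m+1) (m+1)" by (simp add: J_def antid_def)
  have "det P = det J * det X"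
    unfolding PB by (rule det_four_block_mat_upper_right_zero[OF Jc refl Yc Xc])
  moreover have "det P = det H" unfolding P_def by (simp add: det_mult[OF Hc Wc] detW)
  moreover have "det J = (-1)^((m+1) choose 2)" unfolding J_def by (rule det_antid)
  moreover have "X = L * G"
  proof (rule eq_matI)
    fix i k assume "i < dim_row (L * G)" "k < dim_col (L * G)"
    then have ik: "i < s" "k < s" by (auto simp: L_def G_def)
    have "(L * G) $$ (i,k) = (\<Sum>l\<le>i. a (i-l) * (- c (l+k+m+2)))"
      using ik by (simp add: L_def G_def scalar_prod_def sum_trunc3 atLeast0LessThan)
    also have "\<dots> = (\<Sum>p\<le>i. a p * (- c ((i-p)+k+m+2)))"
      by (rule sum_reflect[where f="\<lambda>x y. a x * (- c (y+k+m+2))"])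
    also have "\<dots> = X $$ (i,k)"
    proof -
      have ar: "\<And>x. x \<le> i \<Longrightarrow> Suc (Suc (k+m+i)) - x = Suc (Suc (i+k+m-x))" by arith
      show ?thesis using ik by (simp add: X_def sum_negf[symmetric]) (intro sum.cong, auto simp: ar)
    qed
    finally show "X $$ (i,k) = (L * G) $$ (i,k)" by simp
  qed (auto simp: X_def L_def G_def)
  moreover have "det L = 1"
  proof -
    have "det L = prod_list (diag_mat L)"
      by (rule det_lower_triangular[of s]) (auto simp: L_def)
    also have "diag_mat L = replicate s 1"
      by (rule nth_equalityI) (auto simp: diag_mat_def L_def a0)
    also have "prod_list (replicate s (1::'a)) = 1" by simp
    finally show ?thesis .
  qed
  moreover have "det (L * G) = det L * det G"
    by (rule det_mult) (auto simp: L_def G_def)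
  ultimately show ?thesis unfolding H_def n_def G_def by simp
qed

end



lemma absorb_nat: "k < m \<Longrightarrow> (k+1) * (m choose (k+1)) = (m - k) * (m choose k)"
proof -
  assume "k < m"
  then obtain n where m: "m = Suc n" by (cases m) auto
  have "(k+1) * (m choose (k+1)) = m * (n choose k)" using Suc_times_binomial[of k n] m by simp
  also have "\<dots> = (m - k) * (m choose k)" using binomial_absorb_comp[of m k] m by simp
  finally show ?thesis .
qed

lemma absorb_real: "(real k + 1) * real (m choose (k+1)) = (real m - real k) * real (m choose k)"
proof (cases "k < m")
  case True
  have "real ((k+1) * (m choose (k+1))) = real ((m - k) * (m choose k))" using absorb_nat[OF True] by simp
  then show ?thesis using True by (simp add: of_nat_diff algebra_simps)
next
  case False
  then show ?thesis
    by (cases "k = m") (auto simp: binomial_eq_0)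
qed

lemma coeff_sum_monom: "coeff (\<Sum>k\<le>n. monom (f k) k) i = (if i \<le> n then f i else 0)"
  by (simp add: coeff_sum coeff_monom)

lemma coeff_B: "coeff (B_poly z) i = (if z < 0 then 0 else real (nat z choose i) ^ 2)"
  by (simp add: B_poly_def coeff_sum_monom)

lemma coeff_nar: "coeff (narayana n) i = real ((n - 1) choose i) * real (n choose i) / real (i + 1)"
proof (cases "n = 0")
  case True then show ?thesis by (cases i) (auto simp: narayana_def)
next
  case False
  have "coeff (\<Sum>k<n. monom (real ((n - 1) choose k) * real (n choose k) / real (k + 1)) k) i
     = (if i < n then real ((n - 1) choose i) * real (n choose i) / real (i + 1) else 0)"
    by (simp add: coeff_sum coeff_monom)
  then show ?thesis using False by (auto simp: narayana_def)
qed

lemma R1_core: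
  fixes n j :: nat and a b c :: real
  assumes a: "a = real (n choose (j+2))" and b: "b = real (n choose (j+1))" and c: "c = real (n choose j)"
  shows "(real n+2)*(a+2*b+c)^2 - (2*real n+3)*((a+b)^2+(b+c)^2) + (real n+1)*(a^2-2*b^2+c^2) = 0"
proof -
  have E: "(real n+2)*(a+2*b+c)^2 - (2*real n+3)*((a+b)^2+(b+c)^2) + (real n+1)*(a^2-2*b^2+c^2)
     = 2*(- real n * b^2 + a*b + b*c + (real n+2)*a*c)" by (simp add: power2_eq_square algebra_simps)
  consider "j < n" | "j \<ge> n" by linarith
  then show ?thesis
  proof cases
    case 2
    then have "a = 0" "b = 0" using a b by auto
    then show ?thesis unfolding E by simp
  next
    case 1
    have h1: "(real j+2)*a = (real n - real j - 1)*b"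
      using absorb_real[of "j+1" n] a b by (simp add: algebra_simps)
    have h2: "(real n - real j)*c = (real j + 1)*b"
      using absorb_real[of j n] b c by (simp add: algebra_simps)
    have "(real j+2)*(real n - real j)*(- real n * b^2 + a*b + b*c + (real n+2)*a*c)
       = - real n*(real j+2)*(real n - real j)*b^2 + (real n - real j)*b*((real j+2)*a)
         + (real j+2)*b*((real n - real j)*c) + (real n+2)*((real j+2)*a)*((real n - real j)*c)"
      by (simp add: power2_eq_square algebra_simps)
    also have "\<dots> = - real n*(real j+2)*(real n - real j)*b^2 + (real n - real j)*b*((real n - real j - 1)*b)
         + (real j+2)*b*((real j + 1)*b) + (real n+2)*((real n - real j - 1)*b)*((real j + 1)*b)"
      unfolding h1 h2 ..
    also have "\<dots> = 0" by (simp add: power2_eq_square algebra_simps)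
    finally have "(real j+2)*(real n - real j)*(- real n * b^2 + a*b + b*c + (real n+2)*a*c) = 0" .
    moreover have "(real j+2)*(real n - real j) \<noteq> 0" using 1 by simp
    ultimately show ?thesis unfolding E by simp
  qed
qed

lemma nat_simps2: "nat (int n + 2) = n + 2" "nat (1 + int n) = n + 1" "nat (int n + 1) = n + 1" by auto

lemma R1:
  fixes n :: nat
  defines "B \<equiv> \<lambda>k. B_poly (int k)"
  shows "smult (real n + 2) (B (n+2)) - smult (2*real n+3) (B (n+1) + pCons 0 (B (n+1)))
     + smult (real n+1) (B n - smult 2 (pCons 0 (B n)) + pCons 0 (pCons 0 (B n))) = 0"
proof (rule poly_eqI)
  fix i
  show "coeff (smult (real n + 2) (B (n+2)) - smult (2*real n+3) (B (n+1) + pCons 0 (B (n+1)))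
     + smult (real n+1) (B n - smult 2 (pCons 0 (B n)) + pCons 0 (pCons 0 (B n)))) i = coeff 0 i"
  proof (cases i)
    case 0 then show ?thesis by (simp add: B_def coeff_B nat_simps2 algebra_simps)
  next
    case (Suc i')
    then show ?thesis
    proof (cases i')
      case 0
      then show ?thesis using Suc by (simp add: B_def coeff_B nat_simps2 algebra_simps power2_eq_square)
    next
      case (Suc j)
      have "(real n+2)*(real (n choose (j+2)) + 2*real (n choose (j+1)) + real (n choose j))^2
         - (2*real n+3)*((real (n choose (j+2)) + real (n choose (j+1)))^2+(real (n choose (j+1))+real (n choose j))^2)
         + (real n+1)*(real (n choose (j+2))^2-2*real (n choose (j+1))^2+real (n choose j)^2) = 0"
        by (rule R1_core) auto
      then show ?thesis using Suc \<open>i = Suc i'\<close>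
        by (simp add: B_def coeff_B nat_simps2 algebra_simps numeral_2_eq_2)
    qed
  qed
qed

lemma R2:
  fixes q :: nat
  defines "B \<equiv> \<lambda>k. B_poly (int k)"
  shows "B (q+2) - smult 2 (B (q+1) + pCons 0 (B (q+1)))
     + (B q - smult 2 (pCons 0 (B q)) + pCons 0 (pCons 0 (B q))) = - smult 2 (pCons 0 (narayana (q+1)))"
proof (rule poly_eqI)
  fix i
  show "coeff (B (q+2) - smult 2 (B (q+1) + pCons 0 (B (q+1)))
     + (B q - smult 2 (pCons 0 (B q)) + pCons 0 (pCons 0 (B q)))) i = coeff (- smult 2 (pCons 0 (narayana (q+1)))) i"
  proof (cases i)
    case 0 then show ?thesis by (simp add: B_def coeff_B nat_simps2)
  next
    case (Suc i')
    then show ?thesis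
    proof (cases i')
      case 0
      then show ?thesis using Suc by (simp add: B_def coeff_B coeff_nar nat_simps2 algebra_simps power2_eq_square)
    next
      case (Suc j)
      define a where "a = real (q choose (j+2))"
      define b where "b = real (q choose (j+1))"
      define c where "c = real (q choose j)"
      have h1: "(real j+2)*a = (real q - real j - 1)*b"
        using absorb_real[of "j+1" q] unfolding a_def b_def by (simp add: algebra_simps)
      have h2: "(real q - real j)*c = (real j + 1)*b"
        using absorb_real[of j q] unfolding b_def c_def by (simp add: algebra_simps)
      have "(real j+2)*(a*c-b^2) + b*(b+c) = c*((real j+2)*a) - (real j+2)*b^2 + b^2 + b*c"
        by (simp add: power2_eq_square algebra_simps)
      also have "\<dots> = b*((real q - real j)*c) - (real j + 1)*b^2"
        unfolding h1 by (simp add: power2_eq_square algebra_simps)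
      also have "\<dots> = 0" unfolding h2 by (simp add: power2_eq_square algebra_simps)
      finally have core: "(real j+2)*(a*c-b^2) + b*(b+c) = 0" .
      have "(a+2*b+c)^2 - 2*(a+b)^2 - 2*(b+c)^2 + (a^2 - 2*b^2 + c^2) = - 2 * (b * (b+c) / (real j + 2))"
      proof -
        have "(a+2*b+c)^2 - 2*(a+b)^2 - 2*(b+c)^2 + (a^2 - 2*b^2 + c^2) = 2*(a*c - b^2)"
          by (simp add: power2_eq_square algebra_simps)
        also have "a*c - b^2 = - (b*(b+c) / (real j + 2))"
          using core by (simp add: field_simps)
        finally show ?thesis by simp
      qed
      then show ?thesis using Suc \<open>i = Suc i'\<close>
        by (simp add: B_def coeff_B coeff_nar nat_simps2 a_def b_def c_def algebra_simps numeral_2_eq_2) (auto simp: field_simps)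
    qed
  qed
qed

definition T :: "real poly" where "T = [:0,1:]"
definition Dp :: "real poly fps" where
  "Dp = 1 - fps_const (2*(1+T)) * fps_X + fps_const ((1-T)^2) * (fps_X * fps_X)"
definition Bf :: "real poly fps" where "Bf = Abs_fps (\<lambda>n. B_poly (int n))"

lemma Dmult_nth: "fps_nth (Dp * g) n = fps_nth g n - 2*(1+T)*(if n = 0 then 0 else fps_nth g (n-1))
   + (1-T)^2 * (if n < 2 then 0 else fps_nth g (n-2))"
proof -
  have "Dp * g = g - fps_const (2*(1+T)) * (fps_X * g) + fps_const ((1-T)^2) * (fps_X * (fps_X * g))"
    by (simp only: Dp_def left_diff_distrib distrib_right mult.assoc mult_1)
  moreover have "\<And>n::nat. n - Suc (Suc 0) = n - 2" by simp
  ultimately show ?thesis by (simp del: fps_X_mult_nth add: fps_X_mult_nth[of g] fps_X_mult_nth[of "fps_X * g"])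
qed

lemma Dp_nth: "fps_nth Dp n = (if n = 0 then 1 else if n = 1 then -(2*(1+T)) else if n = 2 then (1-T)^2 else 0)"
  using Dmult_nth[of 1 n] by auto

lemma Dderiv_mult_nth: "fps_nth (fps_deriv Dp * g) n = -(2*(1+T)) * fps_nth g n + 2*(1-T)^2 * (if n = 0 then 0 else fps_nth g (n-1))"
proof -
  have "fps_deriv Dp = fps_const (-(2*(1+T))) + fps_const (2*(1-T)^2) * fps_X"
  proof (rule fps_ext)
    fix n show "fps_nth (fps_deriv Dp) n = fps_nth (fps_const (-(2*(1+T))) + fps_const (2*(1-T)^2) * fps_X) n"
      by (cases n) (auto simp: Dp_nth fps_X_def numeral_2_eq_2)
  qed
  then show ?thesis by (simp add: distrib_right mult.assoc)
qed

lemma polyT: "of_nat k * p = smult (real k) p" "T * p = pCons 0 p" "(1+T)*p = p + pCons 0 p"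
   "(1-T)^2 * p = p - smult 2 (pCons 0 p) + pCons 0 (pCons 0 p)"
  by (simp_all add: of_nat_poly T_def power2_eq_square algebra_simps)

lemma R1T: "of_nat (n+2) * B_poly (int (n+2)) - of_nat (2*n+3) * ((1+T) * B_poly (int (n+1)))
   + of_nat (n+1) * ((1-T)^2 * B_poly (int n)) = 0"
  using R1[of n] unfolding polyT by (simp add: algebra_simps)


lemma Bf_nth: "fps_nth Bf n = B_poly (int n)" by (simp add: Bf_def)

lemma B0: "B_poly 0 = 1" by (simp add: B_poly_def)
lemma B1: "B_poly 1 = 1 + T"
  by (simp add: B_poly_def T_def monom_altdef) (simp add: one_pCons)

lemma L1: "fps_const 2 * Dp * fps_deriv Bf + fps_deriv Dp * Bf = 0"
proof (rule fps_ext)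
  fix n
  have e: "fps_nth (fps_const 2 * Dp * fps_deriv Bf + fps_deriv Dp * Bf) n
     = 2 * fps_nth (Dp * fps_deriv Bf) n + fps_nth (fps_deriv Dp * Bf) n"
    by (simp add: mult.assoc)
  show "fps_nth (fps_const 2 * Dp * fps_deriv Bf + fps_deriv Dp * Bf) n = fps_nth 0 n"
  proof (cases n)
    case 0
    then show ?thesis unfolding e Dmult_nth Dderiv_mult_nth by (simp add: Bf_nth B0 B1)
  next
    case (Suc n')
    note R = R1T[of n']
    show ?thesis
    proof (cases n')
      case 0
      then show ?thesis using Suc R unfolding e Dmult_nth Dderiv_mult_nth
        by (simp add: Bf_nth B0 B1 algebra_simps)
    next
      case (Suc j)
      have R: "of_nat (j+3) * B_poly (int (j+3)) - of_nat (2*j+5) * ((1+T) * B_poly (int (j+2)))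
         + of_nat (j+2) * ((1-T)^2 * B_poly (int (j+1))) = 0"
        using R1T[of "j+1"] by (simp add: algebra_simps)
      have "fps_nth (fps_const 2 * Dp * fps_deriv Bf + fps_deriv Dp * Bf) n
         = 2 * (of_nat (j+3) * B_poly (int (j+3)) - 2*(1+T)*(of_nat (j+2) * B_poly (int (j+2)))
            + (1-T)^2 * (of_nat (j+1) * B_poly (int (j+1))))
           + (-(2*(1+T)) * B_poly (int (j+2)) + 2*(1-T)^2 * B_poly (int (j+1)))"
        unfolding e Dmult_nth Dderiv_mult_nth using \<open>n = Suc n'\<close> Suc
        by (simp add: Bf_nth add_ac)
      also have "\<dots> = 2 * (of_nat (j+3) * B_poly (int (j+3)) - of_nat (2*j+5) * ((1+T) * B_poly (int (j+2)))
         + of_nat (j+2) * ((1-T)^2 * B_poly (int (j+1))))"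
        by (simp add: algebra_simps)
      also have "\<dots> = 0" unfolding R by simp
      finally show ?thesis by simp
    qed
  qed
qed

definition cf :: "real poly fps" where "cf = Dp * Bf"

lemma Bc: "Bf * cf = 1"
proof -
  define f where "f = Dp * (Bf * Bf)"
  have "fps_deriv f = Bf * (fps_const 2 * Dp * fps_deriv Bf + fps_deriv Dp * Bf)"
    unfolding f_def by (simp add: algebra_simps fps_numeral_fps_const[symmetric])
  also have "\<dots> = 0" by (simp add: L1)
  finally have "f = fps_const (fps_nth f 0)" by simp
  moreover have "fps_nth f 0 = 1" proof -
    have "fps_nth Dp 0 = 1" using Dp_nth[of 0] by simp
    then show ?thesis by (simp add: f_def Bf_nth B0)
  qed
  ultimately have "f = 1" by simp
  then show ?thesis by (simp add: cf_def f_def ac_simps)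
qed

lemma conv: "(\<Sum>i\<le>N. B_poly (int i) * fps_nth cf (N - i)) = (if N = 0 then 1 else 0)"
  using arg_cong[OF Bc, of "\<lambda>f. fps_nth f N"] by (simp add: fps_mult_nth Bf_nth atLeast0AtMost)

lemma cf0: "fps_nth cf 0 = 1"
  using Dp_nth[of 0] by (simp add: cf_def Bf_nth B0)

lemma cf_ge2: "fps_nth cf (q+2) = - smult 2 (pCons 0 (narayana (q+1)))"
proof -
  have "fps_nth cf (q+2) = B_poly (int (q+2)) - 2*(1+T) * B_poly (int (q+1)) + (1-T)^2 * B_poly (int q)"
    by (simp add: cf_def Dmult_nth Bf_nth)
  also have "\<dots> = B_poly (int (q+2)) - smult 2 (B_poly (int (q+1)) + pCons 0 (B_poly (int (q+1))))
     + (B_poly (int q) - smult 2 (pCons 0 (B_poly (int q))) + pCons 0 (pCons 0 (B_poly (int q))))"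
    by (simp add: polyT(4) mult.assoc polyT(3) numeral_mult_conv_smult)
  also have "\<dots> = - smult 2 (pCons 0 (narayana (q+1)))" by (rule R2)
  finally show ?thesis .
qed


theorem theorem9:
  fixes m :: nat
  assumes "m \<ge> 1"
  shows "(\<forall>n. 1 \<le> n \<and> n \<le> m \<longrightarrow> D_B (- int m) n = 0) \<and>
         (\<forall>n. n \<ge> m + 1 \<longrightarrow>
            D_B (- int m) n = (-1) ^ ((m + 1) choose 2) * [:0, 2:] ^ (n - m - 1) * p_poly (m + 1) (n - m - 1))"
proof (intro conjI allI impI)
  fix n assume n: "1 \<le> n \<and> n \<le> m"
  define A where "A = mat n n (\<lambda>(i, j). B_poly (int i + int j + - int m))"
  have Ac: "A \<in> carrier_mat n n" by (simp add: A_def)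
  have "det A = (\<Sum>j<n. A $$ (0,j) * cofactor A 0 j)"
    by (rule laplace_expansion_row[OF Ac]) (use n in simp)
  also have "\<dots> = 0"
    by (rule sum.neutral) (use n in \<open>auto simp: A_def B_poly_def\<close>)
  finally show "D_B (- int m) n = 0" by (simp add: D_B_def A_def)
next
  fix n assume n: "m + 1 \<le> n"
  define s where "s = n - m - 1"
  have ns: "n = m + 1 + s" using n by (simp add: s_def)
  define a where "a = (\<lambda>k::nat. B_poly (int k))"
  define c where "c = (\<lambda>k. fps_nth cf k)"
  have conv': "\<And>N. (\<Sum>i\<le>N. a i * c (N - i)) = (if N = 0 then 1 else 0)"
    unfolding a_def c_def by (rule conv)
  have c0': "c 0 = 1" unfolding c_def by (rule cf0)
  have M: "mat n n (\<lambda>(i, j). B_poly (int i + int j + - int m))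
     = mat (m+1+s) (m+1+s) (\<lambda>(i,j). if i+j < m then 0 else a (i+j-m))"
  proof -
    have h: "\<And>i j::nat. nat (int i + int j) = i + j" by simp
    show ?thesis by (rule eq_matI) (auto simp: ns a_def B_poly_def nat_diff_distrib of_nat_diff h)
  qed
  have "D_B (- int m) n = (-1)^((m+1) choose 2) * det (mat s s (\<lambda>(l,k). - c (l+k+m+2)))"
    unfolding D_B_def M by (rule hankel_shift[OF conv' c0'])
  also have "mat s s (\<lambda>(l,k). - c (l+k+m+2)) = [:0,2:] \<cdot>\<^sub>m mat s s (\<lambda>(i,j). narayana (i + j + (m + 1)))"
  proof (rule eq_matI)
    fix i j assume "i < dim_row ([:0,2:] \<cdot>\<^sub>m mat s s (\<lambda>(i,j). narayana (i + j + (m + 1))))"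
      "j < dim_col ([:0,2:] \<cdot>\<^sub>m mat s s (\<lambda>(i,j). narayana (i + j + (m + 1))))"
    then have ij: "i < s" "j < s" by auto
    have "c (i+j+m+2) = - smult 2 (pCons 0 (narayana (i+j+m+1)))"
      unfolding c_def using cf_ge2[of "i+j+m"] by (simp add: add.assoc)
    then show "mat s s (\<lambda>(l,k). - c (l+k+m+2)) $$ (i,j)
        = ([:0,2:] \<cdot>\<^sub>m mat s s (\<lambda>(i,j). narayana (i + j + (m + 1)))) $$ (i,j)"
      using ij by (simp add: ac_simps)
  qed auto
  also have "det \<dots> = [:0,2:] ^ s * p_poly (m+1) s"
    by (simp add: p_poly_def)
  finally show "D_B (- int m) n = (-1) ^ ((m + 1) choose 2) * [:0, 2:] ^ (n - m - 1) * p_poly (m + 1) (n - m - 1)"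
    by (simp add: s_def mult.assoc)
qed

end
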